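(* Let $X$ be a real Hilbert space and $f:X\to\mathbb{R}$ a proper $\Phi_{lsc}$-convex function. If $f$ is locally $C^{1,1}$ around $\bar x\in X$, then there exists $\delta>0$ such that $\partial_{lsc}f(y)\ne\emptyset$ for every $y$ with $\|y-\bar x\|<\delta$.
   Context: $\Phi_{lsc}$ is the class of functions $\varphi(x)=-a\|x\|^2+\langle v,x\rangle+c$ ($a\ge0$, $v\in X^*$, $c\in\mathbb{R}$); $f$ is $\Phi_{lsc}$-convex if it is the pointwise supremum of the $\varphi\in\Phi_{lsc}$ with $\varphi\le f$; proper means at least one such $\varphi$ exists. $f$ is locally $C^{1,1}$ around $\bar x$ if there is a ball $B(\delta,\bar x)=\{y:\|y-\bar x\|<\delta\}$ on which $f$ is Gâteaux differentiable and its Gâteaux derivative is Lipschitz continuous. $\partial_{lsc}f(y)$ is the set of $(a,v)\in\mathbb{R}_+\times X^*$ with $f(x)-f(y)\ge\langle v,x-y\rangle-a\|x\|^2+a\|y\|^2$ for all $x\in X$. *)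

theory Defs
  imports "HOL-Analysis.Analysis"
begin

text \<open>Elements of the dual space X^* are represented as bounded linear functionals.\<close>

definition Phi_lsc :: "('a::real_normed_vector \<Rightarrow> real) set" where
  "Phi_lsc = {\<phi>. \<exists>a v c. a \<ge> 0 \<and> bounded_linear v \<and>
                 \<phi> = (\<lambda>x. - a * (norm x)\<^sup>2 + v x + c)}"

definition Phi_lsc_minorants :: "('a::real_normed_vector \<Rightarrow> real) \<Rightarrow> ('a \<Rightarrow> real) set" where
  "Phi_lsc_minorants f = {\<phi> \<in> Phi_lsc. \<forall>x. \<phi> x \<le> f x}"

definition Phi_lsc_convex :: "('a::real_normed_vector \<Rightarrow> real) \<Rightarrow> bool" where
  "Phi_lsc_convex f \<longleftrightarrow> (\<forall>x. f x = (SUP \<phi>\<in>Phi_lsc_minorants f. \<phi> x))"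

definition Phi_lsc_proper :: "('a::real_normed_vector \<Rightarrow> real) \<Rightarrow> bool" where
  "Phi_lsc_proper f \<longleftrightarrow> Phi_lsc_minorants f \<noteq> {}"

definition gateaux_deriv :: "('a::real_normed_vector \<Rightarrow> real) \<Rightarrow> 'a \<Rightarrow> ('a \<Rightarrow> real) \<Rightarrow> bool" where
  "gateaux_deriv f y D \<longleftrightarrow> bounded_linear D \<and>
     (\<forall>h. ((\<lambda>t. (f (y + t *\<^sub>R h) - f y) / t) \<longlongrightarrow> D h) (at 0))"

definition locally_C11 :: "('a::real_normed_vector \<Rightarrow> real) \<Rightarrow> 'a \<Rightarrow> bool" where
  "locally_C11 f xbar \<longleftrightarrow> (\<exists>\<delta>>0. \<exists>Df L.
      (\<forall>y. norm (y - xbar) < \<delta> \<longrightarrow> gateaux_deriv f y (Df y)) \<and>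
      (\<forall>y z. norm (y - xbar) < \<delta> \<longrightarrow> norm (z - xbar) < \<delta> \<longrightarrow>
          onorm (\<lambda>h. Df y h - Df z h) \<le> L * norm (y - z)))"

definition subdiff_lsc :: "('a::real_normed_vector \<Rightarrow> real) \<Rightarrow> 'a \<Rightarrow> (real \<times> ('a \<Rightarrow> real)) set" where
  "subdiff_lsc f y = {(a, v). a \<ge> 0 \<and> bounded_linear v \<and>
      (\<forall>x. f x - f y \<ge> v (x - y) - a * (norm x)\<^sup>2 + a * (norm y)\<^sup>2)}"

end

theory Submission
  imports Defs
begin

lemma near_est:
  fixes f :: "'a::real_normed_vector \<Rightarrow> real"
  assumes r: "r > 0"
    and gd: "\<And>z. norm (z - y) < r \<Longrightarrow> gateaux_deriv f z (Df z)"
    and lip: "\<And>z. norm (z - y) < r \<Longrightarrow> onorm (\<lambda>h. Df z h - Df y h) \<le> L * norm (z - y)"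
    and h: "norm h < r"
  shows "f (y + h) \<ge> f y + Df y h - \<bar>L\<bar> * (norm h)\<^sup>2"
proof -
  define g where "g t = f (y + t *\<^sub>R h)" for t
  have der: "DERIV g t :> Df (y + t *\<^sub>R h) h" if "0 \<le> t" "t \<le> 1" for t
  proof -
    have "norm (y + t *\<^sub>R h - y) < r"
      proof -
      have "t * norm h \<le> norm h" using that by (simp add: mult_left_le_one_le)
      then show ?thesis using that h by simp
    qed
    then have "gateaux_deriv f (y + t *\<^sub>R h) (Df (y + t *\<^sub>R h))" by (rule gd)
    then have "((\<lambda>s. (f (y + t *\<^sub>R h + s *\<^sub>R h) - f (y + t *\<^sub>R h)) / s) \<longlongrightarrow> Df (y + t *\<^sub>R h) h) (at 0)"
      unfolding gateaux_deriv_def by blast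
    moreover have "\<And>s. f (y + t *\<^sub>R h + s *\<^sub>R h) = g (t + s)"
      by (simp add: g_def scaleR_add_left add.assoc)
    ultimately show ?thesis unfolding DERIV_def g_def by simp
  qed
  obtain z where z: "0 < z" "z < 1" "g 1 - g 0 = (1 - 0) * Df (y + z *\<^sub>R h) h"
    using MVT2[of 0 1 g "\<lambda>t. Df (y + t *\<^sub>R h) h"] der by auto
  have zin: "norm (y + z *\<^sub>R h - y) < r"
    proof -
      have "z * norm h \<le> norm h" using z by (simp add: mult_left_le_one_le)
      then show ?thesis using z h by simp
    qed
  have bl1: "bounded_linear (Df (y + z *\<^sub>R h))" using gd[OF zin] gateaux_deriv_def by blast
  have bl2: "bounded_linear (Df y)" using gd[of y] r unfolding gateaux_deriv_def by simp
  have bl: "bounded_linear (\<lambda>k. Df (y + z *\<^sub>R h) k - Df y k)"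
    using bounded_linear_sub[OF bl1 bl2] .
  have "\<bar>Df (y + z *\<^sub>R h) h - Df y h\<bar> \<le> onorm (\<lambda>k. Df (y + z *\<^sub>R h) k - Df y k) * norm h"
    using onorm[OF bl, of h] by simp
  also have "\<dots> \<le> (L * norm (z *\<^sub>R h)) * norm h"
    using lip[OF zin] by (intro mult_right_mono) auto
  also have "\<dots> \<le> \<bar>L\<bar> * (norm h)\<^sup>2"
  proof -
    have "L * norm (z *\<^sub>R h) \<le> \<bar>L\<bar> * norm h"
      using z by (auto intro!: mult_mono simp: abs_mult_pos abs_le_iff mult_left_le_one_le)
        (smt (verit, best) mult_left_le_one_le mult_mono norm_ge_zero zero_le_mult_iff)
    then show ?thesis by (metis mult.assoc norm_ge_zero mult_right_mono power2_eq_square)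
  qed
  finally have "\<bar>Df (y + z *\<^sub>R h) h - Df y h\<bar> \<le> \<bar>L\<bar> * (norm h)\<^sup>2" .
  moreover have "f (y + h) - f y = Df (y + z *\<^sub>R h) h" using z(3) by (simp add: g_def)
  ultimately show ?thesis by linarith
qed

lemma far_est:
  fixes f :: "'a::real_normed_vector \<Rightarrow> real"
  assumes a0: "a0 \<ge> 0" and bv: "bounded_linear v0" and bw: "bounded_linear w"
    and minor: "\<And>x. - a0 * (norm x)\<^sup>2 + v0 x + c0 \<le> f x" and r: "r > 0"
  shows "\<exists>A\<ge>0. \<forall>h. norm h \<ge> r \<longrightarrow> f (y + h) \<ge> f y + w h - A * (norm h)\<^sup>2"
proof -
  define B where "B = onorm v0 + onorm w"
  define K where "K = \<bar>f y\<bar> + 2 * a0 * (norm y)\<^sup>2 + onorm v0 * norm y + \<bar>c0\<bar>"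
  have ov: "onorm v0 \<ge> 0" "onorm w \<ge> 0" using onorm_pos_le bv bw by auto
  have B0: "B \<ge> 0" using ov B_def by simp
  have K0: "K \<ge> 0" using ov a0 K_def by simp
  define A where "A = 2 * a0 + B / r + K / r\<^sup>2"
  have A0: "A \<ge> 0" using A_def a0 B0 K0 r by simp
  show ?thesis
  proof (intro exI[of _ A] conjI allI impI A0)
    fix h :: 'a
    assume hr: "norm h \<ge> r"
    define n where "n = norm h"
    have n0: "n \<ge> r" using hr n_def by simp
    have t1: "(norm (y + h))\<^sup>2 \<le> 2 * (norm y)\<^sup>2 + 2 * n\<^sup>2"
    proof -
      have "norm (y + h) \<le> norm y + n" using norm_triangle_ineq n_def by blast
      then have "(norm (y + h))\<^sup>2 \<le> (norm y + n)\<^sup>2" by (simp add: power_mono)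
      also have "\<dots> \<le> 2 * (norm y)\<^sup>2 + 2 * n\<^sup>2" using sum_squares_bound[of "norm y" n] by (simp add: power2_sum)
      finally show ?thesis .
    qed
    have t2: "v0 (y + h) \<ge> - onorm v0 * norm y - onorm v0 * n"
    proof -
      have "\<bar>v0 y\<bar> \<le> onorm v0 * norm y" using onorm[OF bv, of y] by simp
      moreover have "\<bar>v0 h\<bar> \<le> onorm v0 * n" using onorm[OF bv, of h] n_def by simp
      moreover have "v0 (y + h) = v0 y + v0 h" using bv by (simp add: linear_simps)
      ultimately show ?thesis by linarith
    qed
    have t3: "w h \<le> onorm w * n" using onorm[OF bw, of h] n_def by simp
    have t4: "(B / r) * n\<^sup>2 \<ge> B * n"
    proof -
      have "n\<^sup>2 / r \<ge> n" using n0 r by (simp add: power2_eq_square field_simps mult_right_mono)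
      then show ?thesis using B0 by (metis mult_left_mono times_divide_eq_left times_divide_eq_right)
    qed
    have t5: "(K / r\<^sup>2) * n\<^sup>2 \<ge> K"
    proof -
      have "n\<^sup>2 \<ge> r\<^sup>2" using n0 r by (simp add: power_mono)
      then have "n\<^sup>2 / r\<^sup>2 \<ge> 1" using r by simp
      then show ?thesis using K0 by (metis mult_left_mono mult.right_neutral times_divide_eq_left times_divide_eq_right)
    qed
    have "f (y + h) \<ge> - a0 * (norm (y + h))\<^sup>2 + v0 (y + h) + c0" using minor by blast
    moreover have "a0 * (norm (y + h))\<^sup>2 \<le> a0 * (2 * (norm y)\<^sup>2 + 2 * n\<^sup>2)"
      using t1 a0 by (rule mult_left_mono)
    ultimately have fy: "f (y + h) \<ge> - a0 * (2 * (norm y)\<^sup>2 + 2 * n\<^sup>2) - onorm v0 * norm y - onorm v0 * n + c0"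
      using t2 by linarith
    then show "f (y + h) \<ge> f y + w h - A * (norm h)\<^sup>2"
    proof -
      have e: "A * n\<^sup>2 = 2 * a0 * n\<^sup>2 + (B / r) * n\<^sup>2 + (K / r\<^sup>2) * n\<^sup>2"
        unfolding A_def by (simp add: algebra_simps)
      have d1: "a0 * (2 * (norm y)\<^sup>2 + 2 * n\<^sup>2) = 2 * a0 * (norm y)\<^sup>2 + 2 * a0 * n\<^sup>2"
        by (simp add: algebra_simps)
      have d2: "B * n = onorm v0 * n + onorm w * n" unfolding B_def by (simp add: algebra_simps)
      have d3: "K = \<bar>f y\<bar> + 2 * a0 * (norm y)\<^sup>2 + onorm v0 * norm y + \<bar>c0\<bar>" by (fact K_def)
      have "\<bar>f y\<bar> \<ge> f y" "\<bar>c0\<bar> \<ge> - c0" by simp_all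
      have d4: "- a0 * (2 * (norm y)\<^sup>2 + 2 * n\<^sup>2) = - (a0 * (2 * (norm y)\<^sup>2 + 2 * n\<^sup>2))" by simp
      have "f y + w h - A * n\<^sup>2 \<le> f (y + h)"
        using t3 t4 t5 e d1 d2 d3 d4 fy \<open>\<bar>f y\<bar> \<ge> f y\<close> \<open>\<bar>c0\<bar> \<ge> - c0\<close> by linarith
      then show ?thesis using n_def by simp
    qed
  qed
qed

lemma norm_expand:
  fixes y h :: "'a::real_inner"
  shows "(norm (y + h))\<^sup>2 = (norm y)\<^sup>2 + 2 * (y \<bullet> h) + (norm h)\<^sup>2"
  by (simp add: power2_norm_eq_inner inner_add_left inner_add_right inner_commute)

theorem mainTheorem6:
  fixes f :: "'a::{real_inner, complete_space} \<Rightarrow> real" and xbar :: 'a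
  assumes "Phi_lsc_proper f" and "Phi_lsc_convex f" and "locally_C11 f xbar"
  shows "\<exists>\<delta>>0. \<forall>y. norm (y - xbar) < \<delta> \<longrightarrow> subdiff_lsc f y \<noteq> {}"
proof -
  obtain \<delta> Df L where d: "\<delta> > 0"
    and gd: "\<And>y. norm (y - xbar) < \<delta> \<Longrightarrow> gateaux_deriv f y (Df y)"
    and lip: "\<And>y z. norm (y - xbar) < \<delta> \<Longrightarrow> norm (z - xbar) < \<delta> \<Longrightarrow>
          onorm (\<lambda>h. Df y h - Df z h) \<le> L * norm (y - z)"
    using assms(3) unfolding locally_C11_def by blast
  obtain \<phi> where "\<phi> \<in> Phi_lsc_minorants f" using assms(1) unfolding Phi_lsc_proper_def by blast
  then obtain a0 v0 c0 where a0: "a0 \<ge> 0" and bv: "bounded_linear v0"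
    and minor: "\<And>x. - a0 * (norm x)\<^sup>2 + v0 x + c0 \<le> f x"
    unfolding Phi_lsc_minorants_def Phi_lsc_def by auto
  show ?thesis
  proof (intro exI[of _ "\<delta> / 2"] conjI allI impI)
    show "\<delta> / 2 > 0" using d by simp
    fix y assume y: "norm (y - xbar) < \<delta> / 2"
    define r where "r = \<delta> / 2"
    have r: "r > 0" using d r_def by simp
    have zin: "norm (z - xbar) < \<delta>" if "norm (z - y) < r" for z
    proof -
      have "norm (z - xbar) \<le> norm (z - y) + norm (y - xbar)"
        using norm_triangle_ineq[of "z - y" "y - xbar"] by simp
      then show ?thesis using that y r_def by simp
    qed
    have yin: "norm (y - xbar) < \<delta>" using y d by simp
    have bw: "bounded_linear (Df y)" using gd[OF yin] unfolding gateaux_deriv_def by simp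
    have near: "f (y + h) \<ge> f y + Df y h - \<bar>L\<bar> * (norm h)\<^sup>2" if "norm h < r" for h
      using near_est[OF r, of y f Df L h] gd zin lip yin that by blast
    obtain A where A0: "A \<ge> 0" and far: "\<And>h. norm h \<ge> r \<Longrightarrow> f (y + h) \<ge> f y + Df y h - A * (norm h)\<^sup>2"
      using far_est[OF a0 bv bw minor r, of y] by blast
    define a where "a = max A \<bar>L\<bar>"
    have a0': "a \<ge> 0" using A0 a_def by simp
    have key: "f (y + h) \<ge> f y + Df y h - a * (norm h)\<^sup>2" for h
    proof (cases "norm h < r")
      case True
      have "\<bar>L\<bar> * (norm h)\<^sup>2 \<le> a * (norm h)\<^sup>2" using a_def by (simp add: mult_right_mono)
      then show ?thesis using near[OF True] by linarith
    next
      case False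
      have "A * (norm h)\<^sup>2 \<le> a * (norm h)\<^sup>2" using a_def by (simp add: mult_right_mono)
      then show ?thesis using far[of h] False by linarith
    qed
    define v where "v x = Df y x + 2 * a * (y \<bullet> x)" for x
    have bl: "bounded_linear v"
      unfolding v_def
      by (intro bounded_linear_add bw bounded_linear_const_mult bounded_linear_inner_right)
    have "(a, v) \<in> subdiff_lsc f y"
      unfolding subdiff_lsc_def
    proof (clarsimp simp: a0' bl)
      fix x
      define h where "h = x - y"
      have xe: "x = y + h" using h_def by simp
      have lin: "Df y (x - y) = Df y h" using h_def by simp
      have "v (x - y) - a * (norm x)\<^sup>2 + a * (norm y)\<^sup>2 = Df y h - a * (norm h)\<^sup>2"
        unfolding v_def xe by (simp add: norm_expand algebra_simps inner_commute)
      then show "v (x - y) - a * (norm x)\<^sup>2 + a * (norm y)\<^sup>2 \<le> f x - f y"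
        using key[of h] xe by simp
    qed
    then show "subdiff_lsc f y \<noteq> {}" by blast
  qed
qed

end
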